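(* Assume Assumptions 1 and 2 for some $\delta>0$. For any distinct $u_1,u_2\in L$, as $n_R\to\infty$, $$\Pr[(u_1,u_2)\in E\mid S_L,S_R]=p_{u_1u_2}-\frac{p_{u_1u_2}^2}{2}+\left(\frac{p_{u_1u_2}}{6}+\frac{M_{R4}}{2n_RM_{R2}^2}\right)p_{u_1u_2}^2\,(1+O(n_R^{-2\delta})),$$ where $p_{u_1u_2}=\frac{M_{R2}}{M_{R1}^2}\cdot\frac{w_{u_1}w_{u_2}}{n_R}$. In particular $p_{u_1u_2}=O(n_R^{-2\delta})=o(1)$, so the projected graph is sparse.
   Context: Model: left nodes $L$ ($|L|=n_L$), right nodes $R$ ($|R|=n_R$), weight sequences $S_L=(w_u)_{u\in L}$, $S_R=(w_v)_{v\in R}$ of positive reals; $M_{Lk}=\frac1{n_L}\sum_{u\in L}w_u^k$, $M_{Rk}=\frac1{n_R}\sum_{v\in R}w_v^k$. The random bipartite graph $G_b=(L\sqcup R,E_b)$ contains each edge $(u,v)$, $u\in L$, $v\in R$, independently with probability $\min\left(\frac{w_uw_v}{n_RM_{R1}},1\right)$. The projected graph is $G=(L,E)$ with $(u,u')\in E$ for distinct $u,u'\in L$ iff there is $z\in R$ with $(u,z),(u',z)\in E_b$ (a single edge regardless of how many such $z$). Assumption 1: $\frac{w_uw_v}{n_RM_{R1}}\le1$ for all $u\in L,v\in R$. Assumption 2 (parameter $\delta>0$), as $n_L,n_R\to\infty$: $\max(S_L\cup S_R)=O(n_R^{1/2-\delta})$, $\min S_L=\Omega(1)$, $M_{R2}=O(M_{R1}^2)$,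 $M_{R4}=O(n_R^{1-2\delta})$. *)

theory Defs
  imports "HOL-Probability.Probability" "HOL-Library.Landau_Symbols"
begin

text \<open>Left nodes are 0..<nL, right nodes are 0..<nR (two separate index sets);
  weights are given by functions wL, wR on these index sets.\<close>

definition moment :: "nat \<Rightarrow> (nat \<Rightarrow> real) \<Rightarrow> nat \<Rightarrow> real" where
  "moment n w k = (1 / real n) * (\<Sum>i<n. w i ^ k)"

definition edge_prob :: "nat \<Rightarrow> (nat \<Rightarrow> real) \<Rightarrow> real \<Rightarrow> real \<Rightarrow> real" where
  "edge_prob nR wR wu wv = min (wu * wv / (real nR * moment nR wR 1)) 1"

definition bip_graph_pmf ::
  "nat \<Rightarrow> nat \<Rightarrow> (nat \<Rightarrow> real) \<Rightarrow> (nat \<Rightarrow> real) \<Rightarrow> (nat \<times> nat \<Rightarrow> bool) pmf" where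
  "bip_graph_pmf nL nR wL wR =
     Pi_pmf ({..<nL} \<times> {..<nR}) False
       (\<lambda>(u, v). bernoulli_pmf (edge_prob nR wR (wL u) (wR v)))"

definition proj_edge :: "nat \<Rightarrow> nat \<Rightarrow> (nat \<times> nat \<Rightarrow> bool) \<Rightarrow> nat \<Rightarrow> nat \<Rightarrow> bool" where
  "proj_edge nL nR Eb u u' \<longleftrightarrow>
     u \<in> {..<nL} \<and> u' \<in> {..<nL} \<and> u \<noteq> u' \<and> (\<exists>z\<in>{..<nR}. Eb (u, z) \<and> Eb (u', z))"

definition proj_edge_prob ::
  "nat \<Rightarrow> nat \<Rightarrow> (nat \<Rightarrow> real) \<Rightarrow> (nat \<Rightarrow> real) \<Rightarrow> nat \<Rightarrow> nat \<Rightarrow> real" where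
  "proj_edge_prob nL nR wL wR u u' =
     measure_pmf.prob (bip_graph_pmf nL nR wL wR) {Eb. proj_edge nL nR Eb u u'}"

end

theory Submission
  imports Defs
begin

lemma exp_lower3:
  fixes y :: real assumes "y \<ge> 0"
  shows "1 - y + y^2/2 - y^3/6 \<le> exp (-y)"
proof (cases "y = 0")
  case True then show ?thesis by simp
next
  case False
  then have "-y < 0" using assms by simp
  from Maclaurin_minus[OF this, of 3 "\<lambda>_. exp" exp]
  obtain t where t: "-y < t" "t < 0"
    "exp (-y) = (\<Sum>m<3. exp 0 / fact m * (-y) ^ m) + exp t / fact 3 * (-y) ^ 3"
    by (auto intro: DERIV_exp)
  have "exp t \<le> 1" using t by simp
  then have "exp t * y^3 \<le> y^3" using assms by (simp add: mult_left_le_one_le)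
  moreover have "exp (-y) = 1 - y + y^2/2 - exp t * y^3 / 6"
    using t(3) by (simp add: eval_nat_numeral fact_numeral lessThan_Suc algebra_simps)
  ultimately show ?thesis by simp
qed

lemma exp_upper4:
  fixes y :: real assumes "y \<ge> 0"
  shows "exp (-y) \<le> 1 - y + y^2/2 - y^3/6 + y^4/24"
proof (cases "y = 0")
  case True then show ?thesis by simp
next
  case False
  then have "-y < 0" using assms by simp
  from Maclaurin_minus[OF this, of 4 "\<lambda>_. exp" exp]
  obtain t where t: "-y < t" "t < 0"
    "exp (-y) = (\<Sum>m<4. exp 0 / fact m * (-y) ^ m) + exp t / fact 4 * (-y) ^ 4"
    by (auto intro: DERIV_exp)
  have "exp t \<le> 1" using t by simp
  then have "exp t * y^4 \<le> y^4" using assms by (simp add: mult_left_le_one_le)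
  moreover have "exp (-y) = 1 - y + y^2/2 - y^3/6 + exp t * y^4 / 24"
    using t(3) by (simp add: eval_nat_numeral fact_numeral lessThan_Suc algebra_simps)
  ultimately show ?thesis by simp
qed

lemma one_minus_upper:
  fixes q :: real assumes "0 \<le> q" "q \<le> 1"
  shows "1 - q \<le> exp (-q - q^2/2)"
proof -
  define h where "h = (\<lambda>x::real. (1 - x) * exp (x + x^2/2))"
  have "h q \<le> h 0"
  proof (rule DERIV_nonpos_imp_nonincreasing[OF assms(1)])
    fix x assume "0 \<le> x" "x \<le> q"
    have "DERIV h x :> (- (x^2) * exp (x + x^2/2))"
      unfolding h_def
      by (auto intro!: derivative_eq_intros simp: algebra_simps power2_eq_square)
    then show "\<exists>y. DERIV h x :> y \<and> y \<le> 0" by (intro exI[of _ "- (x^2) * exp (x + x^2/2)"]) auto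
  qed
  then have "(1 - q) * exp (q + q^2/2) \<le> 1" by (simp add: h_def)
  then have "(1 - q) * exp (q + q^2/2) * exp (-q - q^2/2) \<le> exp (-q - q^2/2)"
    by (simp add: mult_right_mono)
  then show ?thesis by (simp add: mult.assoc exp_add[symmetric])
qed

lemma one_minus_lower:
  fixes q :: real assumes "0 \<le> q" "q \<le> 1/2"
  shows "exp (-q - q^2/2 - q^3) \<le> 1 - q"
proof -
  define h where "h = (\<lambda>x::real. (1 - x) * exp (x + x^2/2 + x^3))"
  have "h 0 \<le> h q"
  proof (rule DERIV_nonneg_imp_nondecreasing[OF assms(1)])
    fix x assume x: "0 \<le> x" "x \<le> q"
    have "DERIV h x :> ((2 * x^2 - 3 * x^3) * exp (x + x^2/2 + x^3))"
      unfolding h_def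
      by (auto intro!: derivative_eq_intros simp: algebra_simps power2_eq_square power3_eq_cube)
    moreover have "2 * x^2 - 3 * x^3 \<ge> 0"
    proof -
      have "3 * x^3 = x^2 * (3 * x)" by (simp add: power2_eq_square power3_eq_cube)
      also have "\<dots> \<le> x^2 * 2" using x assms by (intro mult_left_mono) auto
      finally show ?thesis by simp
    qed
    ultimately show "\<exists>y. DERIV h x :> y \<and> y \<ge> 0" by (intro exI) auto
  qed
  then have "1 \<le> (1 - q) * exp (q + q^2/2 + q^3)" by (simp add: h_def)
  then have "exp (-q - q^2/2 - q^3) \<le> (1 - q) * exp (q + q^2/2 + q^3) * exp (-q - q^2/2 - q^3)"
    by (simp add: mult_right_mono)
  then show ?thesis by (simp add: mult.assoc exp_add[symmetric])
qed

lemma core_bound: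
  fixes m s1 s2 s3 P :: real
  assumes m: "0 \<le> m" "m \<le> 1/2" and s1: "0 \<le> s1" "s1 \<le> 1/2"
    and s2: "0 \<le> s2" "s2 \<le> m * s1" and s3: "0 \<le> s3" "s3 \<le> m * s2"
    and lo: "1 - exp (-(s1 + s2/2)) \<le> P" and hi: "P \<le> 1 - exp (-(s1 + s2/2 + s3))"
  shows "\<bar>P - (s1 - s1^2/2 + (s1^3/6 + s2/2))\<bar> \<le> 8 * (m + s1) * (s1^3/6 + s2/2)"
proof -
  define D where "D = s1^3/6 + s2/2"
  define K where "K = (m + s1) * D"
  define Q where "Q = (m + s1) * s2"
  have s2s1: "s2 \<le> s1"
  proof -
    have "m * s1 \<le> 1 * s1" using m s1 by (intro mult_right_mono) auto
    then show ?thesis using s2 by simp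
  qed
  have msD: "Q \<le> 2 * K"
  proof -
    have "(m + s1) * s2 \<le> (m + s1) * (2 * D)"
      using m s1 s2 by (intro mult_left_mono) (auto simp: D_def)
    then show ?thesis by (simp add: Q_def K_def)
  qed
  have s1D: "s1 * s1^3 \<le> 6 * K"
  proof -
    have "s1 * s1^3 \<le> s1 * (6 * D)" using s1 s2 by (intro mult_left_mono) (auto simp: D_def)
    also have "\<dots> \<le> (m + s1) * (6 * D)" using m s1 s2 by (intro mult_right_mono) (auto simp: D_def)
    finally show ?thesis by (simp add: K_def)
  qed
  have s1s2: "s1 * s2 \<le> Q" unfolding Q_def using m s2 by (intro mult_right_mono) auto
  have ms2: "m * s2 \<le> Q" unfolding Q_def using s1 s2 by (intro mult_right_mono) auto
  define h where "h = s2/2 + s3"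
  have h0: "0 \<le> h" "h \<le> s2"
  proof -
    have "s3 \<le> 1/2 * s2" using s3 m s2 by (smt (verit) mult_right_mono)
    then show "0 \<le> h" "h \<le> s2" using s2 s3 by (auto simp: h_def)
  qed
  have hs1: "h \<le> s1" using h0 s2s1 by linarith
  have "P \<le> 1 - exp (-(s1 + h))" using hi by (simp add: h_def add.assoc)
  also have "\<dots> \<le> (s1 + h) - (s1+h)^2/2 + (s1+h)^3/6"
    using exp_lower3[of "s1 + h"] s1 h0 by simp
  also have "\<dots> = s1 - s1^2/2 + s1^3/6 + h - h* s1 - h^2/2 + (h* s1)* s1/2 + s1*(h*h)/2 + h*(h*h)/6"
    by (simp add: field_simps power2_eq_square power3_eq_cube)
  finally have up1: "P \<le> s1 - s1^2/2 + s1^3/6 + h - h* s1 - h^2/2 + (h* s1)* s1/2 + s1*(h*h)/2 + h*(h*h)/6" .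
  have a1: "(h* s1)* s1 \<le> s1 * s2"
  proof -
    have "(h* s1)* s1 \<le> h * s1" using h0 s1 by (intro mult_right_le_one_le) auto
    also have "\<dots> \<le> s2 * s1" using h0 s1 by (intro mult_right_mono) auto
    finally show ?thesis by (simp add: mult.commute)
  qed
  have hh: "h*h \<le> s2"
  proof -
    have "h*h \<le> h" using h0 hs1 s1 by (intro mult_right_le_one_le) auto
    then show ?thesis using h0 by simp
  qed
  have a2: "s1*(h*h) \<le> s1 * s2" using hh s1 by (intro mult_left_mono) auto
  have a3: "h*(h*h) \<le> s1 * s2" using hh hs1 h0 by (intro mult_mono) auto
  have hs1n: "0 \<le> h* s1" "0 \<le> h^2" using h0 s1 by auto
  have upper: "P - (s1 - s1^2/2 + D) \<le> 8 * K"
    using up1 a1 a2 a3 hs1n s3 msD s1s2 ms2 h_def D_def by linarith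
  define g where "g = s2/2"
  define x where "x = s1 + g"
  have g0: "0 \<le> g" "g \<le> s1" using s2 s2s1 by (auto simp: g_def)
  have "x - x^2/2 + x^3/6 - x^4/24 \<le> 1 - exp (-x)"
    using exp_upper4[of x] g0 s1 by (simp add: x_def)
  also have "\<dots> \<le> P" using lo by (simp add: x_def g_def)
  finally have lo1: "x - x^2/2 + x^3/6 - x^4/24 \<le> P" .
  have id: "x - x^2/2 + x^3/6 = s1 - s1^2/2 + s1^3/6 + g - g* s1 - g^2/2 + (g* s1)* s1/2 + s1*(g*g)/2 + g*(g*g)/6"
    unfolding x_def by (simp add: field_simps power2_eq_square power3_eq_cube)
  have b: "0 \<le> (g* s1)* s1" "0 \<le> s1*(g*g)" "0 \<le> g*(g*g)" using g0 s1 by auto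
  have gg: "g^2 \<le> g * s1" using g0 by (simp add: power2_eq_square mult_left_mono)
  have gs: "g * s1 = s1 * s2 / 2" by (simp add: g_def)
  have "x^4 \<le> (2* s1)^4" using g0 s1 unfolding x_def by (intro power_mono) auto
  also have "(2* s1)^4 = 16 * (s1 * s1^3)" by (simp add: power4_eq_xxxx power3_eq_cube)
  finally have x4: "x^4 \<le> 16 * (s1 * s1^3)" .
  have lower: "-(8 * K) \<le> P - (s1 - s1^2/2 + D)"
  proof -
    have l1: "s1 - s1^2/2 + s1^3/6 + g - g* s1 - g^2/2 - x^4/24 \<le> P" using lo1 id b by linarith
    have l2: "g^2 \<le> s1 * s2 / 2" using gg gs by linarith
    have l3: "x^4/24 \<le> 4 * K" using x4 s1D by linarith
    have l4: "s1 * s2 \<le> 2 * K" using s1s2 msD by linarith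
    have "0 \<le> K" using m s1 s2 by (simp add: K_def D_def)
    then show ?thesis using l1 l2 l3 l4 gs g_def D_def by linarith
  qed
  have "8 * (m + s1) * (s1^3/6 + s2/2) = 8 * K" by (simp add: K_def D_def)
  then show ?thesis using upper lower unfolding D_def by linarith
qed

lemma prod_bound:
  fixes q :: "'a \<Rightarrow> real"
  assumes Z: "finite Z" and q: "\<And>z. z \<in> Z \<Longrightarrow> 0 \<le> q z \<and> q z \<le> m"
    and m: "0 \<le> m" "m \<le> 1/2" and s1: "(\<Sum>z\<in>Z. q z) \<le> 1/2"
  shows "\<bar>(1 - (\<Prod>z\<in>Z. 1 - q z)) - ((\<Sum>z\<in>Z. q z) - (\<Sum>z\<in>Z. q z)^2/2 +
            ((\<Sum>z\<in>Z. q z)^3/6 + (\<Sum>z\<in>Z. (q z)^2)/2))\<bar>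
         \<le> 8 * (m + (\<Sum>z\<in>Z. q z)) * ((\<Sum>z\<in>Z. q z)^3/6 + (\<Sum>z\<in>Z. (q z)^2)/2)"
proof -
  define s1 where "s1 = (\<Sum>z\<in>Z. q z)"
  define s2 where "s2 = (\<Sum>z\<in>Z. (q z)^2)"
  define s3 where "s3 = (\<Sum>z\<in>Z. (q z)^3)"
  have s1n: "0 \<le> s1" unfolding s1_def using q by (intro sum_nonneg) auto
  have s2n: "0 \<le> s2" unfolding s2_def by (intro sum_nonneg) auto
  have s3n: "0 \<le> s3" unfolding s3_def using q by (intro sum_nonneg) auto
  have s2m: "s2 \<le> m * s1" unfolding s2_def s1_def sum_distrib_left
    using q by (intro sum_mono) (auto simp: power2_eq_square mult_right_mono)
  have s3m: "s3 \<le> m * s2" unfolding s3_def s2_def sum_distrib_left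
  proof (intro sum_mono)
    fix z assume "z \<in> Z"
    then have "q z * (q z * q z) \<le> m * (q z * q z)" using q[of z]
      by (intro mult_right_mono) auto
    then show "q z ^ 3 \<le> m * q z ^ 2"
      by (simp add: power2_eq_square power3_eq_cube mult.assoc)
  qed
  have up: "(\<Prod>z\<in>Z. 1 - q z) \<le> exp (-(s1 + s2/2))"
  proof -
    have "(\<Prod>z\<in>Z. 1 - q z) \<le> (\<Prod>z\<in>Z. exp (- q z - (q z)^2/2))"
    proof (intro prod_mono)
      fix i assume "i \<in> Z"
      with q[OF this] m have "0 \<le> q i" "q i \<le> 1" by auto
      then show "0 \<le> 1 - q i \<and> 1 - q i \<le> exp (- q i - (q i)^2/2)"
        by (auto intro!: one_minus_upper)
    qed
    also have "\<dots> = exp (\<Sum>z\<in>Z. - q z - (q z)^2/2)" using Z by (simp add: exp_sum)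
    also have "(\<Sum>z\<in>Z. - q z - (q z)^2/2) = -(s1 + s2/2)"
      by (simp add: s1_def s2_def sum_subtractf sum_negf sum_divide_distrib)
    finally show ?thesis .
  qed
  have lo: "exp (-(s1 + s2/2 + s3)) \<le> (\<Prod>z\<in>Z. 1 - q z)"
  proof -
    have "exp (\<Sum>z\<in>Z. - q z - (q z)^2/2 - (q z)^3) = (\<Prod>z\<in>Z. exp (- q z - (q z)^2/2 - (q z)^3))"
      using Z by (simp add: exp_sum)
    also have "\<dots> \<le> (\<Prod>z\<in>Z. 1 - q z)"
    proof (intro prod_mono)
      fix i assume "i \<in> Z"
      with q[OF this] m have "0 \<le> q i" "q i \<le> 1/2" by auto
      then show "0 \<le> exp (- q i - (q i)^2/2 - (q i)^3) \<and> exp (- q i - (q i)^2/2 - (q i)^3) \<le> 1 - q i"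
        by (auto intro!: one_minus_lower)
    qed
    also have "(\<Sum>z\<in>Z. - q z - (q z)^2/2 - (q z)^3) = -(s1 + s2/2 + s3)"
      by (simp add: s1_def s2_def s3_def sum_subtractf sum_negf sum_divide_distrib)
    finally show ?thesis by simp
  qed
  show ?thesis
    using core_bound[OF m s1n _ s2n s2m s3n s3m, of "1 - (\<Prod>z\<in>Z. 1 - q z)"] up lo s1
    unfolding s1_def s2_def by simp
qed

lemma prob_pair_times:
  "measure_pmf.prob (pair_pmf M N) (A \<times> B) = measure_pmf.prob M A * measure_pmf.prob N B"
proof -
  have "measure_pmf.prob (pair_pmf M N) (A \<times> B) =
        measure_pmf.prob (pair_pmf M N) ((A \<times> B) \<inter> set_pmf (pair_pmf M N))"
    by (rule measure_Int_set_pmf[symmetric])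
  also have "(A \<times> B) \<inter> set_pmf (pair_pmf M N) = (A \<inter> set_pmf M) \<times> (B \<inter> set_pmf N)"
    by auto
  also have "measure_pmf.prob (pair_pmf M N) \<dots> =
     measure_pmf.prob M (A \<inter> set_pmf M) * measure_pmf.prob N (B \<inter> set_pmf N)"
    by (rule measure_pmf_prob_product) auto
  finally show ?thesis by (simp add: measure_Int_set_pmf)
qed

lemma prob_noboth:
  fixes p :: "'a \<times> 'b \<Rightarrow> bool pmf"
  assumes "finite Z" "a \<noteq> b"
  shows "measure_pmf.prob (Pi_pmf ({a,b} \<times> Z) False p)
           {f. \<forall>z\<in>Z. \<not> (f (a,z) \<and> f (b,z))}
         = (\<Prod>z\<in>Z. 1 - pmf (p (a,z)) True * pmf (p (b,z)) True)"
  using assms(1)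
proof (induction rule: finite_induct)
  case empty
  then show ?case by simp
next
  case (insert z Z)
  let ?Q = "Pi_pmf ({a,b} \<times> Z) False p"
  let ?E = "{f. \<forall>z\<in>Z. \<not> (f (a,z) \<and> f (b,z))}"
  have S: "{a,b} \<times> insert z Z = insert (a,z) (insert (b,z) ({a,b} \<times> Z))" by auto
  have fin: "finite ({a,b} \<times> Z)" using insert by auto
  have "Pi_pmf ({a,b} \<times> insert z Z) False p =
    map_pmf (\<lambda>(y, f). f((a,z) := y)) (pair_pmf (p (a,z))
      (map_pmf (\<lambda>(y, f). f((b,z) := y)) (pair_pmf (p (b,z)) ?Q)))"
    unfolding S using insert assms
    by (simp add: Pi_pmf_insert fin)
  also have "\<dots> = map_pmf (\<lambda>(y, f). f((a,z) := y))
      (map_pmf (apsnd (\<lambda>(y, f). f((b,z) := y))) (pair_pmf (p (a,z)) (pair_pmf (p (b,z)) ?Q)))"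
    by (simp add: pair_map_pmf2)
  finally have eq: "Pi_pmf ({a,b} \<times> insert z Z) False p = \<dots>" .
  let ?F = "(\<lambda>x. (\<lambda>(y, f). f((a,z) := y)) (apsnd (\<lambda>(y, f). f((b,z) := y)) x))"
  have pre: "?F -` {f. \<forall>z'\<in>insert z Z. \<not> (f (a,z') \<and> f (b,z'))}
     = {False} \<times> (UNIV \<times> ?E) \<union> {True} \<times> ({False} \<times> ?E)"
    using insert assms by (auto simp: apsnd_def map_prod_def split: prod.splits)
  have "measure_pmf.prob (Pi_pmf ({a,b} \<times> insert z Z) False p)
           {f. \<forall>z'\<in>insert z Z. \<not> (f (a,z') \<and> f (b,z'))}
       = measure_pmf.prob (pair_pmf (p (a,z)) (pair_pmf (p (b,z)) ?Q))
           ({False} \<times> (UNIV \<times> ?E) \<union> {True} \<times> ({False} \<times> ?E))"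
    by (simp only: eq map_pmf_comp measure_map_pmf comp_def pre)
  also have "\<dots> = measure_pmf.prob (pair_pmf (p (a,z)) (pair_pmf (p (b,z)) ?Q)) ({False} \<times> (UNIV \<times> ?E))
     + measure_pmf.prob (pair_pmf (p (a,z)) (pair_pmf (p (b,z)) ?Q)) ({True} \<times> ({False} \<times> ?E))"
    by (rule measure_pmf.finite_measure_Union) auto
  also have "\<dots> = (pmf (p (a,z)) False + pmf (p (a,z)) True * pmf (p (b,z)) False) * measure_pmf.prob ?Q ?E"
    by (simp add: prob_pair_times measure_pmf_single algebra_simps)
  also have "pmf (p (a,z)) False = 1 - pmf (p (a,z)) True"
    using pmf_False_conv_True by blast
  also have "pmf (p (b,z)) False = 1 - pmf (p (b,z)) True"
    using pmf_False_conv_True by blast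
  finally show ?case using insert by (simp add: algebra_simps)
qed

lemma proj_prob:
  assumes u: "u1 < nL" "u2 < nL" "u1 \<noteq> u2"
  shows "proj_edge_prob nL nR wL wR u1 u2 =
    1 - (\<Prod>z<nR. 1 - pmf (bernoulli_pmf (edge_prob nR wR (wL u1) (wR z))) True
                   * pmf (bernoulli_pmf (edge_prob nR wR (wL u2) (wR z))) True)"
proof -
  define P where "P = (\<lambda>(u, v). bernoulli_pmf (edge_prob nR wR (wL u) (wR v)))"
  define A where "A = {..<nL} \<times> {..<nR}"
  define S where "S = {u1,u2} \<times> {..<nR}"
  define E where "E = {f. \<exists>z\<in>{..<nR}. f (u1,z) \<and> f (u2,z)}"
  define r where "r = (\<lambda>f x. if x \<in> S then f x else (False::bool))"
  have SA: "S \<subseteq> A" using u by (auto simp: S_def A_def)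
  have finA: "finite A" by (simp add: A_def)
  have E1: "{Eb. proj_edge nL nR Eb u1 u2} = E"
    using u by (auto simp: proj_edge_def E_def)
  have E2: "r -` E = E" by (auto simp: r_def E_def S_def)
  have "proj_edge_prob nL nR wL wR u1 u2 = measure_pmf.prob (Pi_pmf A False P) E"
    unfolding proj_edge_prob_def bip_graph_pmf_def E1 P_def A_def by simp
  also have "\<dots> = measure_pmf.prob (Pi_pmf A False P) (r -` E)" by (simp add: E2)
  also have "\<dots> = measure_pmf.prob (map_pmf r (Pi_pmf A False P)) E" by simp
  also have "map_pmf r (Pi_pmf A False P) = Pi_pmf S False P"
    unfolding r_def by (rule Pi_pmf_subset[symmetric, OF finA SA])
  also have "measure_pmf.prob (Pi_pmf S False P) E = 1 - measure_pmf.prob (Pi_pmf S False P) (UNIV - E)"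
    using measure_pmf.prob_compl[of E "Pi_pmf S False P"] by simp
  also have "UNIV - E = {f. \<forall>z\<in>{..<nR}. \<not> (f (u1,z) \<and> f (u2,z))}" by (auto simp: E_def)
  also have "measure_pmf.prob (Pi_pmf S False P) \<dots> =
     (\<Prod>z\<in>{..<nR}. 1 - pmf (P (u1,z)) True * pmf (P (u2,z)) True)"
    unfolding S_def by (rule prob_noboth) (use u in auto)
  finally show ?thesis by (simp add: P_def)
qed

lemma step:
  fixes n :: nat and W :: "nat \<Rightarrow> real" and w1 w2 c1 c2 \<delta> p D :: real
  assumes n: "n > 0" and Wpos: "\<And>z. z < n \<Longrightarrow> W z > 0" and w: "w1 > 0" "w2 > 0"
    and A1a: "\<And>z. z < n \<Longrightarrow> w1 * W z / (real n * moment n W 1) \<le> 1"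
    and A1b: "\<And>z. z < n \<Longrightarrow> w2 * W z / (real n * moment n W 1) \<le> 1"
    and w1b: "w1 \<le> c1 * real n powr (1/2 - \<delta>)" and w2b: "w2 \<le> c1 * real n powr (1/2 - \<delta>)"
    and M2b: "moment n W 2 \<le> c2 * (moment n W 1)^2"
    and small: "c2 * c1^2 * real n powr (-2*\<delta>) \<le> 1/2"
  assumes p_def: "p = moment n W 2 / (moment n W 1)^2 * (w1 * w2 / real n)"
    and D_def: "D = (p / 6 + moment n W 4 / (2 * real n * (moment n W 2)^2)) * p^2"
  shows "0 < p" "p \<le> c2 * c1^2 * real n powr (-2*\<delta>)" "0 < D"
    "\<bar>(1 - (\<Prod>z<n. 1 - pmf (bernoulli_pmf (edge_prob n W w1 (W z))) True
                   * pmf (bernoulli_pmf (edge_prob n W w2 (W z))) True)) - (p - p^2/2 + D)\<bar>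
       \<le> 16 * p * D"
proof -
  define M1 where "M1 = moment n W 1"
  define M2 where "M2 = moment n W 2"
  define M4 where "M4 = moment n W 4"
  have nr: "real n > 0" using n by simp
  have S1: "(\<Sum>z<n. W z) = n * M1" using n by (simp add: M1_def moment_def)
  have S2: "(\<Sum>z<n. W z ^ 2) = n * M2" using n by (simp add: M2_def moment_def)
  have S4: "(\<Sum>z<n. W z ^ 4) = n * M4" using n by (simp add: M4_def moment_def)
  have "(\<Sum>z<n. W z) > 0" using n Wpos by (intro sum_pos) auto
  then have M1p: "M1 > 0" using S1 nr by (simp add: zero_less_mult_iff)
  have "(\<Sum>z<n. W z ^ 2) > 0" using n by (intro sum_pos) (auto dest: Wpos)
  then have M2p: "M2 > 0" using S2 nr by (simp add: zero_less_mult_iff)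
  define a where "a = w1 * w2 / (real n * M1)^2"
  have ap: "a > 0" using w nr M1p by (simp add: a_def)
  define q where "q = (\<lambda>z. a * W z ^ 2)"
  have ep: "pmf (bernoulli_pmf (edge_prob n W w (W z))) True = w * W z / (real n * M1)"
    if "z < n" "w > 0" "w * W z / (real n * moment n W 1) \<le> 1" for w z
  proof -
    have "edge_prob n W w (W z) = w * W z / (real n * M1)"
      using that by (simp add: edge_prob_def M1_def)
    moreover have "0 \<le> w * W z / (real n * M1)" using that Wpos[of z] nr M1p by simp
    ultimately show ?thesis using that by (simp add: M1_def)
  qed
  have qeq: "pmf (bernoulli_pmf (edge_prob n W w1 (W z))) True
           * pmf (bernoulli_pmf (edge_prob n W w2 (W z))) True = q z" if "z < n" for z
    using ep[OF that w(1) A1a[OF that]] ep[OF that w(2) A1b[OF that]]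
    by (simp add: q_def a_def power2_eq_square field_simps)
  have peq: "p = a * (n * M2)"
    unfolding p_def M2_def[symmetric] M1_def[symmetric]
    using nr M1p by (simp add: a_def power2_eq_square field_simps)
  have sq: "(\<Sum>z<n. q z) = p" by (simp add: q_def sum_distrib_left[symmetric] S2 peq)
  have sq2: "(\<Sum>z<n. (q z)^2) = a^2 * (n * M4)"
    by (simp add: q_def power_mult_distrib sum_distrib_left[symmetric] S4[symmetric] power_mult[symmetric])
  have Deq: "D = p^3/6 + (\<Sum>z<n. (q z)^2)/2"
    unfolding sq2 D_def M2_def[symmetric] M4_def[symmetric]
    using nr M2p by (simp add: peq power2_eq_square power3_eq_cube field_simps)
  show pp: "0 < p" using peq ap nr M2p by simp
  have qle: "0 \<le> q z \<and> q z \<le> p" if "z < n" for z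
  proof -
    have "W z ^ 2 \<le> (\<Sum>z<n. W z ^ 2)" using that by (intro member_le_sum) auto
    then show ?thesis using ap by (simp add: q_def peq S2 mult_left_mono)
  qed
  have c2p: "c2 > 0"
  proof -
    have "0 < c2 * M1^2" using M2b M2p unfolding M2_def[symmetric] M1_def[symmetric] by linarith
    then show ?thesis using M1p by (simp add: zero_less_mult_iff)
  qed
  have pc: "p \<le> c2 * (w1 * w2 / real n)"
  proof -
    have "M2 \<le> c2 * M1^2" using M2b unfolding M2_def[symmetric] M1_def[symmetric] .
    then have "M2 / M1^2 \<le> c2" using M1p by (simp add: divide_le_eq)
    moreover have "0 \<le> w1 * w2 / real n" using w nr by simp
    ultimately show ?thesis unfolding p_def M1_def[symmetric] M2_def[symmetric] by (rule mult_right_mono)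
  qed
  have "w1 * w2 \<le> (c1 * real n powr (1/2 - \<delta>)) * (c1 * real n powr (1/2 - \<delta>))"
    using w w1b w2b by (intro mult_mono) auto
  also have "\<dots> = c1^2 * (real n powr (-2*\<delta>) * real n)"
  proof -
    have e1: "real n powr (1/2 - \<delta>) * real n powr (1/2 - \<delta>) = real n powr ((1/2 - \<delta>) + (1/2 - \<delta>))"
      by (rule powr_add[symmetric])
    have e2: "real n powr (-2*\<delta>) * real n powr 1 = real n powr (-2*\<delta> + 1)"
      by (rule powr_add[symmetric])
    have "(1/2 - \<delta>) + (1/2 - \<delta>) = -2*\<delta> + 1" by simp
    then have "real n powr (1/2 - \<delta>) * real n powr (1/2 - \<delta>) = real n powr (-2*\<delta>) * real n powr 1"
      using e1 e2 by simp
    then show ?thesis using nr by (simp add: power2_eq_square algebra_simps)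
  qed
  finally have ww: "w1 * w2 \<le> c1^2 * real n powr (-2*\<delta>) * real n" by (simp add: mult.assoc)
  then have "w1 * w2 / real n \<le> c1^2 * real n powr (-2*\<delta>)" using nr by (simp add: divide_le_eq)
  then have "c2 * (w1 * w2 / real n) \<le> c2 * (c1^2 * real n powr (-2*\<delta>))" using c2p by (intro mult_left_mono) auto
  then show pb: "p \<le> c2 * c1^2 * real n powr (-2*\<delta>)" using pc by (simp add: mult.assoc)
  have phalf: "p \<le> 1/2" using pb small by linarith
  show Dp: "0 < D" unfolding Deq using pp by (intro add_pos_nonneg) (auto intro: sum_nonneg)
  have "\<bar>(1 - (\<Prod>z<n. 1 - q z)) - (p - p^2/2 + D)\<bar> \<le> 8 * (p + p) * D"
    using prod_bound[of "{..<n}" q p] qle pp phalf unfolding sq Deq by auto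
  moreover have "(\<Prod>z<n. 1 - pmf (bernoulli_pmf (edge_prob n W w1 (W z))) True
                   * pmf (bernoulli_pmf (edge_prob n W w2 (W z))) True) = (\<Prod>z<n. 1 - q z)"
    by (intro prod.cong) (auto simp: qeq)
  ultimately show "\<bar>(1 - (\<Prod>z<n. 1 - pmf (bernoulli_pmf (edge_prob n W w1 (W z))) True
                   * pmf (bernoulli_pmf (edge_prob n W w2 (W z))) True)) - (p - p^2/2 + D)\<bar>
       \<le> 16 * p * D" by simp
qed

theorem mainTheorem4:
  fixes nL nR :: "nat \<Rightarrow> nat"
    and wL wR :: "nat \<Rightarrow> nat \<Rightarrow> real"
    and u1 u2 :: "nat \<Rightarrow> nat"
    and \<delta> :: real
  assumes delta_pos: "\<delta> > 0"
    and nL_inf: "filterlim nL at_top sequentially"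
    and nR_inf: "filterlim nR at_top sequentially"
    and wL_pos: "\<And>k u. u < nL k \<Longrightarrow> wL k u > 0"
    and wR_pos: "\<And>k v. v < nR k \<Longrightarrow> wR k v > 0"
    and A1: "\<And>k u v. u < nL k \<Longrightarrow> v < nR k \<Longrightarrow>
               wL k u * wR k v / (real (nR k) * moment (nR k) (wR k) 1) \<le> 1"
    and A2_max: "(\<lambda>k. Max (wL k ` {..<nL k} \<union> wR k ` {..<nR k}))
                   \<in> O(\<lambda>k. real (nR k) powr (1/2 - \<delta>))"
    and A2_min: "(\<lambda>k. Min (wL k ` {..<nL k})) \<in> \<Omega>(\<lambda>k. 1)"
    and A2_M2: "(\<lambda>k. moment (nR k) (wR k) 2) \<in> O(\<lambda>k. (moment (nR k) (wR k) 1)\<^sup>2)"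
    and A2_M4: "(\<lambda>k. moment (nR k) (wR k) 4) \<in> O(\<lambda>k. real (nR k) powr (1 - 2 * \<delta>))"
    and u_in: "\<And>k. u1 k < nL k" "\<And>k. u2 k < nL k"
    and u_dist: "\<And>k. u1 k \<noteq> u2 k"
  shows "let M1 = (\<lambda>k. moment (nR k) (wR k) 1);
             M2 = (\<lambda>k. moment (nR k) (wR k) 2);
             M4 = (\<lambda>k. moment (nR k) (wR k) 4);
             p = (\<lambda>k. M2 k / (M1 k)\<^sup>2 * (wL k (u1 k) * wL k (u2 k) / real (nR k)))
         in (\<exists>e. e \<in> O(\<lambda>k. real (nR k) powr (- 2 * \<delta>)) \<and>
                 (\<forall>\<^sub>F k in sequentially. proj_edge_prob (nL k) (nR k) (wL k) (wR k) (u1 k) (u2 k)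
                      = p k - (p k)\<^sup>2 / 2
                        + (p k / 6 + M4 k / (2 * real (nR k) * (M2 k)\<^sup>2)) * (p k)\<^sup>2 * (1 + e k)))
            \<and> p \<in> O(\<lambda>k. real (nR k) powr (- 2 * \<delta>))
            \<and> p \<longlonglongrightarrow> 0"
proof -
  define p where "p = (\<lambda>k. moment (nR k) (wR k) 2 / (moment (nR k) (wR k) 1)\<^sup>2
                       * (wL k (u1 k) * wL k (u2 k) / real (nR k)))"
  define D where "D = (\<lambda>k. (p k / 6 + moment (nR k) (wR k) 4 / (2 * real (nR k) * (moment (nR k) (wR k) 2)\<^sup>2)) * (p k)\<^sup>2)"
  define P where "P = (\<lambda>k. proj_edge_prob (nL k) (nR k) (wL k) (wR k) (u1 k) (u2 k))"
  define e where "e = (\<lambda>k. (P k - (p k - (p k)\<^sup>2 / 2 + D k)) / D k)"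
  define r where "r = (\<lambda>k. real (nR k) powr (- 2 * \<delta>))"
  obtain c1 where c1: "c1 > 0" and ev1: "eventually (\<lambda>k. norm (Max (wL k ` {..<nL k} \<union> wR k ` {..<nR k}))
       \<le> c1 * norm (real (nR k) powr (1/2 - \<delta>))) at_top"
    using A2_max unfolding bigo_def by blast
  obtain c2 where c2: "c2 > 0" and ev2: "eventually (\<lambda>k. norm (moment (nR k) (wR k) 2)
       \<le> c2 * norm ((moment (nR k) (wR k) 1)\<^sup>2)) at_top"
    using A2_M2 unfolding bigo_def by blast
  define c where "c = c2 * c1^2"
  have cpos: "c > 0" using c1 c2 by (simp add: c_def)
  have ev0: "eventually (\<lambda>k. 1 \<le> nR k) sequentially"
    using nR_inf by (simp add: filterlim_at_top)
  have rlim: "r \<longlonglongrightarrow> 0"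
    unfolding r_def
    by (rule tendsto_neg_powr) (use delta_pos filterlim_compose[OF filterlim_real_sequentially nR_inf] in auto)
  have crlim: "(\<lambda>k. c * r k) \<longlonglongrightarrow> 0"
    using tendsto_mult_left[OF rlim, of c] by simp
  have ev3: "eventually (\<lambda>k. c * r k < 1/2) sequentially"
    using order_tendstoD(2)[OF crlim, of "1/2"] by simp
  have good: "eventually (\<lambda>k. 0 < p k \<and> p k \<le> c * r k \<and> 0 < D k \<and>
                  \<bar>P k - (p k - (p k)^2/2 + D k)\<bar> \<le> 16 * p k * D k) sequentially"
    using ev0 ev1 ev2 ev3
  proof eventually_elim
    case (elim k)
    have n: "nR k > 0" using elim by simp
    have fin: "finite (wL k ` {..<nL k} \<union> wR k ` {..<nR k})" by simp
    have Mx: "Max (wL k ` {..<nL k} \<union> wR k ` {..<nR k}) \<le> c1 * real (nR k) powr (1/2 - \<delta>)"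
      using elim(2) by simp
    have w1b: "wL k (u1 k) \<le> c1 * real (nR k) powr (1/2 - \<delta>)"
    proof -
      have "wL k (u1 k) \<in> wL k ` {..<nL k} \<union> wR k ` {..<nR k}" using u_in by auto
      from Max_ge[OF fin this] Mx show ?thesis by linarith
    qed
    have w2b: "wL k (u2 k) \<le> c1 * real (nR k) powr (1/2 - \<delta>)"
    proof -
      have "wL k (u2 k) \<in> wL k ` {..<nL k} \<union> wR k ` {..<nR k}" using u_in by auto
      from Max_ge[OF fin this] Mx show ?thesis by linarith
    qed
    have M2b: "moment (nR k) (wR k) 2 \<le> c2 * (moment (nR k) (wR k) 1)^2"
      using elim(3) by simp
    have sm: "c2 * c1^2 * real (nR k) powr (-2*\<delta>) \<le> 1/2"
      using elim(4) by (simp add: c_def r_def)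
    note st = step[OF n wR_pos wL_pos[OF u_in(1)] wL_pos[OF u_in(2)]
      A1[OF u_in(1)] A1[OF u_in(2)] w1b w2b M2b sm, of "p k" "D k"]
    have Peq: "P k = 1 - (\<Prod>z<nR k. 1 - pmf (bernoulli_pmf (edge_prob (nR k) (wR k) (wL k (u1 k)) (wR k z))) True
                   * pmf (bernoulli_pmf (edge_prob (nR k) (wR k) (wL k (u2 k)) (wR k z))) True)"
      unfolding P_def by (rule proj_prob) (use u_in u_dist in auto)
    show ?case using st Peq by (simp add: p_def D_def c_def r_def)
  qed
  have e_bound: "eventually (\<lambda>k. norm (e k) \<le> (16 * c) * norm (r k)) sequentially"
    using good
  proof eventually_elim
    case (elim k)
    then have "\<bar>e k\<bar> = \<bar>P k - (p k - (p k)^2/2 + D k)\<bar> / D k" by (simp add: e_def abs_divide)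
    also have "\<dots> \<le> 16 * p k" using elim by (simp add: divide_le_eq)
    also have "\<dots> \<le> 16 * (c * r k)" using elim by simp
    finally show ?case by (simp add: r_def)
  qed
  have eO: "e \<in> O(r)" using e_bound unfolding r_def by (intro bigoI) simp
  have eq: "eventually (\<lambda>k. P k = p k - (p k)\<^sup>2 / 2 + D k * (1 + e k)) sequentially"
    using good
  proof eventually_elim
    case (elim k)
    then have "D k \<noteq> 0" by simp
    then show ?case by (simp add: e_def field_simps)
  qed
  have pO: "p \<in> O(r)"
  proof (rule bigoI[of _ c])
    show "eventually (\<lambda>k. norm (p k) \<le> c * norm (r k)) at_top"
      using good by eventually_elim (simp add: r_def)
  qed
  have plim: "p \<longlonglongrightarrow> 0"
  proof (rule tendsto_sandwich[of "\<lambda>_. 0" p sequentially "\<lambda>k. c * r k"])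
    show "eventually (\<lambda>k. 0 \<le> p k) sequentially" using good by eventually_elim simp
    show "eventually (\<lambda>k. p k \<le> c * r k) sequentially" using good by eventually_elim simp
  qed (use crlim in auto)
  show ?thesis
    unfolding Let_def
    using eO eq pO plim unfolding p_def D_def P_def r_def
    by (auto simp: mult.assoc)
qed
end
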